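(* Let $E\in M_n(\mathbb{FT})$ be idempotent. Then: (i) $E$ has the unique eigenvalue $0$, which is its maximum cycle mean, and the corresponding eigenspace is $C(E)$; (ii) $E_{i,i}=0$ if and only if $i$ is a node of the critical graph of $E$; (iii) the columns of $E$ with diagonal entry $0$ form a generating set for $C(E)$; (iv) every extremal point of $C(E)$ is, up to scaling, a column of $E$ with $0$ in the diagonal position; (v) the rows of $E$ with diagonal entry $0$ form a generating set for $R(E)$; (vi) every extremal point of $R(E)$ is, up to scaling, a row of $E$ with $0$ in the diagonal position; (vii) the rank of $E$ equals the number of strongly connected components of the critical graph of $E$; (viii) each strongly connected component of the critical graph of $E$ is a complete subgraph of $\Gamma_E$; (ix) if $i,j$ lie in the same strongly connected component of the critical graph, then the $i$th column of $E$ is a tropical multiple (real shift) of the $j$th column; (x) if $i,j$ lie in the same strongly connected component of the critical graph, then the $i$th row of $E$ is a tropical multiple of the $j$th row.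
   Context: $\mathbb{FT}$ is $\mathbb{R}$ with $a\oplus b=\max(a,b)$, $a\otimes b=a+b$; $M_n(\mathbb{FT})$ is the semigroup of real $n\times n$ matrices under $(A\otimes B)_{i,j}=\max_k(A_{i,k}+B_{k,j})$. A scalar $\lambda\in\mathbb{R}$ is an eigenvalue of $A$ if $A\otimes x=\lambda\otimes x$ for some $x\in\mathbb{R}^n$, where $(\lambda\otimes x)_i=\lambda+x_i$; the eigenspace is the set of all such $x$. $C(A)$, $R(A)\subseteq\mathbb{R}^n$ are the sets of finite componentwise maxima of real shifts of columns, resp. rows, of $A$ (submodules under componentwise max and shifts). A point $x$ of such a set $X$ is extremal if $X\setminus\{\lambda\otimes x:\lambda\in\mathbb{R}\}$ is closed under componentwise max and shifts. The rank of an idempotent $E$ is the minimal cardinality of a generating set of $C(E)$. $\Gamma_A$ is the complete weighted digraph on $\{1,\dots,n\}$ with edge $j\to i$ of weight $A_{i,j}$; the maximum cycle mean is the maximum arithmetic mean of edge weights over closed paths; the critical graph consists of all nodes and edges lying on closed paths whose mean equals the maximum cycle mean. *)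

theory Defs
  imports Complex_Main
begin

text \<open>Tropical (max-plus) matrices of size n x n are modelled as functions
  'n \<Rightarrow> 'n \<Rightarrow> real over a finite index type 'n (n = CARD('n)); vectors in R^n as
  'n \<Rightarrow> real.\<close>

type_synonym 'n tmat = "'n \<Rightarrow> 'n \<Rightarrow> real"
type_synonym 'n tvec = "'n \<Rightarrow> real"

definition tmul :: "('n::finite) tmat \<Rightarrow> 'n tmat \<Rightarrow> 'n tmat" where
  "tmul A B = (\<lambda>i j. Max (range (\<lambda>k. A i k + B k j)))"

definition tmulv :: "('n::finite) tmat \<Rightarrow> 'n tvec \<Rightarrow> 'n tvec" where
  "tmulv A x = (\<lambda>i. Max (range (\<lambda>k. A i k + x k)))"

definition tidempotent :: "('n::finite) tmat \<Rightarrow> bool" where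
  "tidempotent E \<longleftrightarrow> tmul E E = E"

definition tshift :: "real \<Rightarrow> 'n tvec \<Rightarrow> 'n tvec" where
  "tshift c x = (\<lambda>i. c + x i)"

definition teigenvalue :: "('n::finite) tmat \<Rightarrow> real \<Rightarrow> bool" where
  "teigenvalue A l \<longleftrightarrow> (\<exists>x. tmulv A x = tshift l x)"

definition teigenspace :: "('n::finite) tmat \<Rightarrow> real \<Rightarrow> 'n tvec set" where
  "teigenspace A l = {x. tmulv A x = tshift l x}"

definition tspan :: "'n tvec set \<Rightarrow> 'n tvec set" where
  "tspan S = {x. \<exists>F c. finite F \<and> F \<noteq> {} \<and> F \<subseteq> S \<and>
                        x = (\<lambda>i. Max ((\<lambda>v. c v + v i) ` F))}"

definition tcol :: "'n tmat \<Rightarrow> 'n \<Rightarrow> 'n tvec" where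
  "tcol A j = (\<lambda>i. A i j)"

definition trow :: "'n tmat \<Rightarrow> 'n \<Rightarrow> 'n tvec" where
  "trow A i = (\<lambda>j. A i j)"

definition colspace :: "'n tmat \<Rightarrow> 'n tvec set" where
  "colspace A = tspan (range (tcol A))"

definition rowspace :: "'n tmat \<Rightarrow> 'n tvec set" where
  "rowspace A = tspan (range (trow A))"

definition tclosed :: "'n tvec set \<Rightarrow> bool" where
  "tclosed X \<longleftrightarrow> (\<forall>x\<in>X. \<forall>y\<in>X. (\<lambda>i. max (x i) (y i)) \<in> X) \<and> (\<forall>x\<in>X. \<forall>c. tshift c x \<in> X)"

definition textremal :: "'n tvec \<Rightarrow> 'n tvec set \<Rightarrow> bool" where
  "textremal x X \<longleftrightarrow> x \<in> X \<and> tclosed (X - {tshift c x | c. True})"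

definition tgenerates :: "'n tvec set \<Rightarrow> 'n tvec set \<Rightarrow> bool" where
  "tgenerates G X \<longleftrightarrow> G \<subseteq> X \<and> tspan G = X"

definition trank :: "('n::finite) tmat \<Rightarrow> nat" where
  "trank E = (LEAST k. \<exists>G. finite G \<and> card G = k \<and> tgenerates G (colspace E))"

text \<open>Closed paths in Gamma_A: nonempty node lists p, with edges p!t \<rightarrow> p!((t+1) mod |p|);
  the edge j \<rightarrow> i has weight A i j.\<close>
definition cycle_weight :: "'n tmat \<Rightarrow> 'n list \<Rightarrow> real" where
  "cycle_weight A p = (\<Sum>t<length p. A (p ! ((t + 1) mod length p)) (p ! t))"

definition cycle_mean :: "'n tmat \<Rightarrow> 'n list \<Rightarrow> real" where
  "cycle_mean A p = cycle_weight A p / real (length p)"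

definition max_cycle_mean :: "'n tmat \<Rightarrow> real" where
  "max_cycle_mean A = Sup {cycle_mean A p | p. p \<noteq> []}"

definition critical_cycle :: "'n tmat \<Rightarrow> 'n list \<Rightarrow> bool" where
  "critical_cycle A p \<longleftrightarrow> p \<noteq> [] \<and> cycle_mean A p = max_cycle_mean A"

definition crit_node :: "'n tmat \<Rightarrow> 'n \<Rightarrow> bool" where
  "crit_node A i \<longleftrightarrow> (\<exists>p. critical_cycle A p \<and> i \<in> set p)"

definition crit_edge :: "'n tmat \<Rightarrow> 'n \<Rightarrow> 'n \<Rightarrow> bool" where
  "crit_edge A j i \<longleftrightarrow> (\<exists>p. critical_cycle A p \<and>
      (\<exists>t<length p. p ! t = j \<and> p ! ((t + 1) mod length p) = i))"

definition crit_same_scc :: "'n tmat \<Rightarrow> 'n \<Rightarrow> 'n \<Rightarrow> bool" where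
  "crit_same_scc A i j \<longleftrightarrow> crit_node A i \<and> crit_node A j \<and>
      (crit_edge A)\<^sup>*\<^sup>* i j \<and> (crit_edge A)\<^sup>*\<^sup>* j i"

definition crit_sccs :: "'n tmat \<Rightarrow> 'n set set" where
  "crit_sccs A = {{j. crit_same_scc A i j} | i. crit_node A i}"

end

theory Submission imports Defs begin

lemma tmul_ge: "A i k + B k j \<le> tmul A B i j"
  unfolding tmul_def by (rule Max_ge) auto
lemma tmul_ex: "\<exists>k. tmul A B i j = A i k + (B::('n::finite) tmat) k j"
proof -
  have "Max (range (\<lambda>k. A i k + B k j)) \<in> range (\<lambda>k. A i k + B k j)" by (rule Max_in) auto
  then obtain k where "Max (range (\<lambda>k. A i k + B k j)) = A i k + B k j" by blast
  then show ?thesis unfolding tmul_def by blast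
qed
lemma tmulv_ge: "A i k + x k \<le> tmulv A x i"
  unfolding tmulv_def by (rule Max_ge) auto
lemma tmulv_ex: "\<exists>k. tmulv A x i = A i k + (x::('n::finite) tvec) k"
proof -
  have "Max (range (\<lambda>k. A i k + x k)) \<in> range (\<lambda>k. A i k + x k)" by (rule Max_in) auto
  then obtain k where "Max (range (\<lambda>k. A i k + x k)) = A i k + x k" by blast
  then show ?thesis unfolding tmulv_def by blast
qed

lemma tmulv_shift: "tmulv (A::('n::finite) tmat) (tshift c x) = tshift c (tmulv A x)"
proof (rule ext)
  fix i
  obtain k1 where k1: "tmulv A (tshift c x) i = A i k1 + tshift c x k1" using tmulv_ex by blast
  obtain k2 where k2: "tmulv A x i = A i k2 + x k2" using tmulv_ex by blast
  have "A i k1 + x k1 \<le> tmulv A x i" by (rule tmulv_ge)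
  moreover have "A i k2 + tshift c x k2 \<le> tmulv A (tshift c x) i" by (rule tmulv_ge)
  ultimately show "tmulv A (tshift c x) i = tshift c (tmulv A x) i"
    using k1 k2 by (simp add: tshift_def)
qed

lemma tshift_tshift: "tshift a (tshift b x) = tshift (a+b) x"
  by (simp add: tshift_def fun_eq_iff)
lemma tshift_0: "tshift 0 x = x" by (simp add: tshift_def)

lemma tspan_mono: "A \<subseteq> B \<Longrightarrow> tspan A \<subseteq> tspan B"
  unfolding tspan_def by blast

lemma fmax_in:
  assumes "finite L" "L \<noteq> {}" "\<forall>l\<in>L. h l \<in> Y"
    "\<forall>a\<in>Y. \<forall>b\<in>Y. (\<lambda>i. max (a i) (b i)) \<in> Y"
  shows "(\<lambda>i. Max ((\<lambda>l. h l i) ` L)) \<in> Y"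
  using assms
proof (induction L rule: finite_ne_induct)
  case (singleton l) then show ?case by simp
next
  case (insert l L)
  have "(\<lambda>i. Max ((\<lambda>l. h l i) ` insert l L)) = (\<lambda>i. max (h l i) (Max ((\<lambda>l. h l i) ` L)))"
    using insert by simp
  then show ?case using insert by simp
qed

definition trn :: "'n tmat \<Rightarrow> 'n tmat" where "trn E = (\<lambda>i j. E j i)"

lemma trn_idem: "tidempotent (E::('n::finite) tmat) \<Longrightarrow> tidempotent (trn E)"
  unfolding tidempotent_def
proof -
  assume h: "tmul E E = E"
  show "tmul (trn E) (trn E) = trn E"
  proof (rule ext, rule ext)
    fix i j
    have "tmul E E j i = E j i" using h by simp
    then show "tmul (trn E) (trn E) i j = trn E i j"
      unfolding tmul_def trn_def by (simp add: ac_simps)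
  qed
qed

lemma trow_trn: "trow E = tcol (trn E)"
  by (simp add: trow_def tcol_def trn_def fun_eq_iff)
lemma rowspace_trn: "rowspace E = colspace (trn E)"
  by (simp add: rowspace_def colspace_def trow_trn)

lemma rot1: "(\<Sum>s<L. g ((s+1) mod L)) = (\<Sum>s<(L::nat). (g::nat\<Rightarrow>real) s)"
proof (cases L)
  case 0 then show ?thesis by simp
next
  case (Suc m)
  have "(\<Sum>s<Suc m. g ((s+1) mod Suc m)) = g ((m+1) mod Suc m) + (\<Sum>s<m. g ((s+1) mod Suc m))"
    by simp
  also have "(\<Sum>s<m. g ((s+1) mod Suc m)) = (\<Sum>s<m. g (Suc s))"
    by (intro sum.cong) auto
  also have "g ((m+1) mod Suc m) = g 0" by simp
  also have "g 0 + (\<Sum>s<m. g (Suc s)) = (\<Sum>s<Suc m. g s)"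
    by (rule sum.lessThan_Suc_shift[symmetric])
  finally show ?thesis using Suc by simp
qed
lemma rot: "(\<Sum>s<L. g ((t+s) mod L)) = (\<Sum>s<(L::nat). (g::nat\<Rightarrow>real) s)"
proof (induction t)
  case 0 then show ?case by (intro sum.cong) auto
next
  case (Suc t)
  have "(\<Sum>s<L. g ((Suc t + s) mod L)) = (\<Sum>s<L. (\<lambda>u. g ((t+u) mod L)) ((s+1) mod L))"
  proof (intro sum.cong refl)
    fix s
    have "(t + (s+1) mod L) mod L = (Suc t + s) mod L" by (simp add: mod_add_right_eq)
    then show "g ((Suc t + s) mod L) = (\<lambda>u. g ((t+u) mod L)) ((s+1) mod L)" by simp
  qed
  also have "\<dots> = (\<Sum>s<L. g ((t+s) mod L))" by (rule rot1)
  finally show ?case using Suc by simp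
qed

lemma cw_rot: "cycle_weight E p = (\<Sum>s<length p. E (p ! ((t + s + 1) mod length p)) (p ! ((t + s) mod length p)))"
proof -
  let ?L = "length p"
  define g where "g = (\<lambda>u. E (p ! ((u + 1) mod ?L)) (p ! u))"
  have "(\<Sum>s<?L. E (p ! ((t + s + 1) mod ?L)) (p ! ((t + s) mod ?L))) = (\<Sum>s<?L. g ((t+s) mod ?L))"
    unfolding g_def by (intro sum.cong) (auto simp: mod_Suc_eq)
  also have "\<dots> = (\<Sum>s<?L. g s)" by (rule rot)
  finally show ?thesis unfolding cycle_weight_def g_def by simp
qed

locale idem =
  fixes E :: "('n::finite) tmat"
  assumes idem: "tidempotent E"
begin

lemma EE: "tmul E E = E" using idem unfolding tidempotent_def .

lemma tri: "E i k + E k j \<le> E i j"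
  using tmul_ge[of E i k E j] EE by simp

lemma isplit: "\<exists>k. E i j = E i k + E k j"
  using tmul_ex[of E E i j] EE by simp

lemma diag_le: "E i i \<le> 0" using tri[of i i i] by simp

lemma Qdiag: "E i j + E j i = 0 \<Longrightarrow> E i i = 0"
  using tri[of i j i] diag_le[of i] by simp

lemma Qtrans: "E a b + E b a = 0 \<Longrightarrow> E b c + E c b = 0 \<Longrightarrow> E a c + E c a = 0"
  using tri[of a b c] tri[of c b a] tri[of a c a] diag_le[of a] by linarith

lemma key: "\<exists>k. E k k = 0 \<and> E i j = E i k + E k j"
proof -
  define f where "f = (\<lambda>k. SOME k'. E k j = E k k' + E k' j)"
  have hf: "E k j = E k (f k) + E (f k) j" for k
    unfolding f_def by (rule someI_ex) (rule isplit)
  define g where "g = (\<lambda>u. (f ^^ u) i)"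
  have C: "s < u \<Longrightarrow> E (g s) j = E (g s) (g u) + E (g u) j" for s u
  proof (induction u)
    case 0 then show ?case by simp
  next
    case (Suc u)
    have gs: "g (Suc u) = f (g u)" by (simp add: g_def)
    show ?case
    proof (cases "s = u")
      case True then show ?thesis using hf[of "g u"] gs by simp
    next
      case False
      with Suc have ih: "E (g s) j = E (g s) (g u) + E (g u) j" by simp
      have h2: "E (g u) j = E (g u) (g (Suc u)) + E (g (Suc u)) j" using hf[of "g u"] gs by simp
      have "E (g s) (g u) + E (g u) (g (Suc u)) \<le> E (g s) (g (Suc u))" by (rule tri)
      moreover have "E (g s) (g (Suc u)) + E (g (Suc u)) j \<le> E (g s) j" by (rule tri)
      ultimately show ?thesis using ih h2 by linarith
    qed
  qed
  have "\<not> inj g"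
  proof
    assume "inj g"
    then have "finite (UNIV::nat set)" using finite_imageD[of g UNIV] by simp
    then show False by simp
  qed
  then obtain s t where "g s = g t" "s \<noteq> t" unfolding inj_def by blast
  then obtain s t where st: "g s = g t" "s < t" by (metis linorder_neqE_nat)
  have "E (g t) (g t) = 0" using C[OF st(2)] st(1) by simp
  moreover have "E i j = E i (g t) + E (g t) j" using C[of 0 t] st(2) by (simp add: g_def)
  ultimately show ?thesis by blast
qed

lemma col_eig: "tmulv E (tcol E j) = tcol E j"
proof (rule ext)
  fix i
  have "tmulv E (tcol E j) i = tmul E E i j" by (simp add: tmulv_def tmul_def tcol_def)
  then show "tmulv E (tcol E j) i = tcol E j i" using EE by (simp add: tcol_def)
qed

lemma EEx: "tmulv E (tmulv E x) = tmulv E x"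
proof (rule ext, rule antisym)
  fix i
  let ?y = "tmulv E x"
  obtain m where m: "tmulv E ?y i = E i m + ?y m" using tmulv_ex by blast
  obtain k where k: "?y m = E m k + x k" using tmulv_ex by blast
  have "E i m + E m k \<le> E i k" by (rule tri)
  moreover have "E i k + x k \<le> ?y i" by (rule tmulv_ge)
  ultimately show "tmulv E ?y i \<le> ?y i" using m k by linarith
next
  fix i
  let ?y = "tmulv E x"
  obtain k where k: "?y i = E i k + x k" using tmulv_ex by blast
  obtain m where m: "E i k = E i m + E m k" using isplit by blast
  have "E m k + x k \<le> ?y m" by (rule tmulv_ge)
  moreover have "E i m + ?y m \<le> tmulv E ?y i" by (rule tmulv_ge)
  ultimately show "?y i \<le> tmulv E ?y i" using m k by linarith
qed

lemma span_eig:
  assumes G: "G \<subseteq> {x. tmulv E x = x}" and xs: "x \<in> tspan G"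
  shows "tmulv E x = x"
proof -
  obtain F c where F: "finite F" "F \<noteq> {}" "F \<subseteq> G" and x: "x = (\<lambda>i. Max ((\<lambda>v. c v + v i) ` F))"
    using xs unfolding tspan_def by blast
  have xge: "c v + v i \<le> x i" if "v \<in> F" for v i using F that unfolding x by (intro Max_ge) auto
  have xex: "\<exists>v\<in>F. x i = c v + v i" for i
  proof -
    have "Max ((\<lambda>v. c v + v i) ` F) \<in> (\<lambda>v. c v + v i) ` F" using F by (intro Max_in) auto
    then show ?thesis unfolding x by auto
  qed
  have veig: "tmulv E v i = v i" if "v \<in> F" for v i using G F that by auto
  show ?thesis
  proof (rule ext, rule antisym)
    fix i
    obtain k where k: "tmulv E x i = E i k + x k" using tmulv_ex by blast
    obtain v where v: "v \<in> F" "x k = c v + v k" using xex by blast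
    have "E i k + v k \<le> tmulv E v i" by (rule tmulv_ge)
    hence "E i k + v k \<le> v i" using veig[OF v(1)] by simp
    thus "tmulv E x i \<le> x i" using k v xge[OF v(1), of i] by linarith
  next
    fix i
    obtain v where v: "v \<in> F" "x i = c v + v i" using xex by blast
    obtain k where k: "tmulv E v i = E i k + v k" using tmulv_ex by blast
    have vi: "v i = E i k + v k" using k veig[OF v(1)] by simp
    have "E i k + x k \<le> tmulv E x i" by (rule tmulv_ge)
    thus "x i \<le> tmulv E x i" using vi v xge[OF v(1), of k] by linarith
  qed
qed

lemma eig_max:
  assumes x: "tmulv E x = x" and R: "R \<subseteq> {r. E r r = 0}"
    and cov: "\<forall>l. E l l = 0 \<longrightarrow> (\<exists>r\<in>R. E l r + E r l = 0)"
  shows "x i = Max ((\<lambda>r. x r + E i r) ` R)"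
proof -
  have xge: "E i k + x k \<le> x i" for i k using tmulv_ge[of E i k x] x by simp
  obtain k where k: "x i = E i k + x k" using tmulv_ex[of E x i] x by auto
  obtain l where l: "E l l = 0" "E i k = E i l + E l k" using key by blast
  obtain r where r: "r \<in> R" "E l r + E r l = 0" using cov l by blast
  have "E i l + E l r \<le> E i r" by (rule tri)
  moreover have "E r l + x l \<le> x r" "E l k + x k \<le> x l" by (rule xge)+
  ultimately have ge: "x i \<le> x r + E i r" using k l r by linarith
  show ?thesis
  proof (rule sym, rule Max_eqI)
    show "finite ((\<lambda>r. x r + E i r) ` R)" by simp
    show "\<And>y. y \<in> (\<lambda>r. x r + E i r) ` R \<Longrightarrow> y \<le> x i" using xge by (auto simp: add.commute)
    show "x i \<in> (\<lambda>r. x r + E i r) ` R"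
      using ge xge[of i r] r(1) by (intro image_eqI[of _ _ r]) (auto simp: add.commute)
  qed
qed

lemma eig_span:
  assumes x: "tmulv E x = x" and R: "R \<subseteq> {r. E r r = 0}"
    and cov: "\<forall>l. E l l = 0 \<longrightarrow> (\<exists>r\<in>R. E l r + E r l = 0)"
  shows "x \<in> tspan (tcol E ` R)"
proof -
  have xge: "E i k + x k \<le> x i" for i k using tmulv_ge[of E i k x] x by simp
  obtain l where "E l l = 0" using key by blast
  then have Rne: "R \<noteq> {}" using cov by blast
  define c where "c = (\<lambda>g. x (SOME r. r \<in> R \<and> tcol E r = g))"
  have cx: "c (tcol E r) = x r" if r: "r \<in> R" for r
  proof -
    define r' where "r' = (SOME r'. r' \<in> R \<and> tcol E r' = tcol E r)"
    have "r' \<in> R \<and> tcol E r' = tcol E r" unfolding r'_def by (rule someI[of _ r]) (simp add: r)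
    then have r': "r' \<in> R" "tcol E r' = tcol E r" by auto
    have e1: "E r r' = E r r" using fun_cong[OF r'(2), of r] by (simp add: tcol_def)
    have e2: "E r' r = E r' r'" using fun_cong[OF r'(2), of r'] by (simp add: tcol_def)
    have "E r r = 0" using R r by blast
    have "E r' r' = 0" using R r'(1) by blast
    have a: "E r r' + x r' \<le> x r" by (rule xge)
    have b: "E r' r + x r \<le> x r'" by (rule xge)
    have a': "x r' \<le> x r" using a e1 \<open>E r r = 0\<close> by simp
    have b': "x r \<le> x r'" using b e2 \<open>E r' r' = 0\<close> by simp
    have "x r = x r'" using b' a' by (rule antisym)
    moreover have "c (tcol E r) = x r'" unfolding c_def r'_def by (rule refl)
    ultimately show ?thesis by simp
  qed
  have xf: "x = (\<lambda>i. Max ((\<lambda>v. c v + v i) ` (tcol E ` R)))"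
  proof (rule ext)
    fix i
    have "(\<lambda>v. c v + v i) ` (tcol E ` R) = (\<lambda>r. c (tcol E r) + tcol E r i) ` R"
      by (simp add: image_image)
    also have "\<dots> = (\<lambda>r. x r + E i r) ` R"
      using cx by (intro image_cong) (auto simp: tcol_def)
    finally have "(\<lambda>v. c v + v i) ` (tcol E ` R) = (\<lambda>r. x r + E i r) ` R" .
    show "x i = Max ((\<lambda>v. c v + v i) ` (tcol E ` R))"
      unfolding \<open>(\<lambda>v. c v + v i) ` (tcol E ` R) = (\<lambda>r. x r + E i r) ` R\<close> by (rule eig_max[OF x R cov])
  qed
  have "finite (tcol E ` R)" "tcol E ` R \<noteq> {}" using Rne by auto
  then show ?thesis unfolding tspan_def using xf by blast
qed

lemma colspace_eq: "colspace E = {x. tmulv E x = x}"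
proof
  show "colspace E \<subseteq> {x. tmulv E x = x}"
    unfolding colspace_def using span_eig[of "range (tcol E)"] col_eig by blast
  show "{x. tmulv E x = x} \<subseteq> colspace E"
  proof
    fix x assume "x \<in> {x. tmulv E x = x}"
    then have "x \<in> tspan (tcol E ` {r. E r r = 0})" by (intro eig_span) auto
    then show "x \<in> colspace E" unfolding colspace_def using tspan_mono[of "tcol E ` {r. E r r = 0}" "range (tcol E)"] by blast
  qed
qed


lemma path_le: "0 < m \<Longrightarrow> (\<Sum>s<m. E (q (Suc s)) (q s)) \<le> E (q m) (q 0)"
proof (induction m)
  case 0 then show ?case by simp
next
  case (Suc m)
  show ?case
  proof (cases "m = 0")
    case True then show ?thesis by simp
  next
    case False
    with Suc have ih: "(\<Sum>s<m. E (q (Suc s)) (q s)) \<le> E (q m) (q 0)" by simp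
    have "E (q (Suc m)) (q m) + E (q m) (q 0) \<le> E (q (Suc m)) (q 0)" by (rule tri)
    then show ?thesis using ih by simp
  qed
qed

lemma cyc_le: "p \<noteq> [] \<Longrightarrow> cycle_weight E p \<le> 0"
proof -
  assume p: "p \<noteq> []"
  define q where "q = (\<lambda>s. p ! (s mod length p))"
  have "cycle_weight E p = (\<Sum>s<length p. E (q (Suc s)) (q s))"
    unfolding cw_rot[of E p 0] q_def by simp
  also have "\<dots> \<le> E (q (length p)) (q 0)" using p by (intro path_le) simp
  also have "\<dots> \<le> 0" unfolding q_def by (simp add: diag_le)
  finally show ?thesis .
qed

lemma mean_le: "p \<noteq> [] \<Longrightarrow> cycle_mean E p \<le> 0"
  unfolding cycle_mean_def using cyc_le by (simp add: divide_nonpos_nonneg)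

lemma cw_single: "cycle_weight E [k] = E k k" by (simp add: cycle_weight_def)

lemma cw_two: "cycle_weight E [a, b] = E b a + E a b"
  by (simp add: cycle_weight_def numeral_2_eq_2)

lemma mcm: "max_cycle_mean E = 0"
proof -
  obtain k where k: "E k k = 0" using key by blast
  show ?thesis unfolding max_cycle_mean_def
  proof (rule cSup_eq_maximum)
    show "0 \<in> {cycle_mean E p |p. p \<noteq> []}"
      using k by (auto simp: cycle_mean_def cw_single intro!: exI[of _ "[k]"])
    show "\<And>x. x \<in> {cycle_mean E p |p. p \<noteq> []} \<Longrightarrow> x \<le> 0" using mean_le by auto
  qed
qed

lemma crit_cycle_iff: "critical_cycle E p \<longleftrightarrow> p \<noteq> [] \<and> cycle_weight E p = 0"
  unfolding critical_cycle_def mcm cycle_mean_def by auto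

lemma crit_node_iff: "crit_node E i \<longleftrightarrow> E i i = 0"
proof
  assume "E i i = 0"
  then show "crit_node E i" unfolding crit_node_def crit_cycle_iff
    by (intro exI[of _ "[i]"]) (simp add: cw_single)
next
  assume "crit_node E i"
  then obtain p where p: "p \<noteq> []" "cycle_weight E p = 0" "i \<in> set p"
    unfolding crit_node_def crit_cycle_iff by blast
  then obtain t where t: "t < length p" "p ! t = i" by (auto simp: in_set_conv_nth)
  define q where "q = (\<lambda>s. p ! ((t + s) mod length p))"
  have "cycle_weight E p = (\<Sum>s<length p. E (q (Suc s)) (q s))"
    unfolding cw_rot[of E p t] q_def by simp
  also have "\<dots> \<le> E (q (length p)) (q 0)" using p by (intro path_le) simp
  also have "E (q (length p)) (q 0) = E i i" unfolding q_def using t by simp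
  finally show "E i i = 0" using p(2) diag_le[of i] by simp
qed

lemma crit_edge_Q: "crit_edge E j i \<Longrightarrow> E i j + E j i = 0"
proof -
  assume "crit_edge E j i"
  then obtain p t where p: "p \<noteq> []" "cycle_weight E p = 0" and t: "t < length p" "p ! t = j"
    "p ! ((t + 1) mod length p) = i"
    unfolding crit_edge_def crit_cycle_iff by blast
  define L where "L = length p"
  obtain m where m: "L = Suc m" using p unfolding L_def by (cases p) auto
  define q where "q = (\<lambda>s. p ! ((t + s) mod L))"
  have q0: "q 0 = j" unfolding q_def L_def using t by simp
  have q1: "q 1 = i" unfolding q_def L_def using t by simp
  have qL: "q L = j" unfolding q_def L_def using t by simp
  have "0 = (\<Sum>s<L. E (q (Suc s)) (q s))"
    using p(2) unfolding cw_rot[of E p t] q_def L_def by simp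
  also have "\<dots> = E (q 1) (q 0) + (\<Sum>s<m. E (q (Suc (Suc s))) (q (Suc s)))"
    unfolding m by (simp only: sum.lessThan_Suc_shift One_nat_def)
  finally have eq: "0 = E i j + (\<Sum>s<m. E (q (Suc (Suc s))) (q (Suc s)))" using q0 q1 by simp
  show ?thesis
  proof (cases "m = 0")
    case True
    then have "i = j" using q1 qL m by simp
    then show ?thesis using eq True by simp
  next
    case False
    have "(\<Sum>s<m. E ((q \<circ> Suc) (Suc s)) ((q \<circ> Suc) s)) \<le> E ((q \<circ> Suc) m) ((q \<circ> Suc) 0)"
      using False by (intro path_le) simp
    then have "(\<Sum>s<m. E (q (Suc (Suc s))) (q (Suc s))) \<le> E j i" using qL q1 m by simp
    then have "0 \<le> E i j + E j i" using eq by linarith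
    moreover have "E j i + E i j \<le> E j j" by (rule tri)
    ultimately show ?thesis using diag_le[of j] by linarith
  qed
qed

lemma Q_crit_edge: "E i j + E j i = 0 \<Longrightarrow> crit_edge E j i"
  unfolding crit_edge_def crit_cycle_iff
  by (intro exI[of _ "[j, i]"]) (auto simp: cw_two intro!: exI[of _ 0])

lemma rt_Q: "(crit_edge E)\<^sup>*\<^sup>* a b \<Longrightarrow> E a a = 0 \<Longrightarrow> E a b + E b a = 0"
proof (induction rule: rtranclp_induct)
  case base then show ?case by simp
next
  case (step b c)
  have "E c b + E b c = 0" using crit_edge_Q[OF step(2)] .
  then have "E b c + E c b = 0" by simp
  then show ?case using Qtrans step by blast
qed

lemma same_iff: "crit_same_scc E i j \<longleftrightarrow> E i j + E j i = 0"
proof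
  assume "crit_same_scc E i j"
  then show "E i j + E j i = 0" unfolding crit_same_scc_def crit_node_iff using rt_Q by blast
next
  assume Q: "E i j + E j i = 0"
  then have "E j i + E i j = 0" by simp
  then have "crit_edge E i j" "crit_edge E j i" using Q_crit_edge Q by auto
  moreover have "E i i = 0" using Qdiag[OF Q] .
  moreover have "E j j = 0" using Qdiag[OF \<open>E j i + E i j = 0\<close>] .
  ultimately show "crit_same_scc E i j" unfolding crit_same_scc_def crit_node_iff by auto
qed

lemma colshift: "E i j + E j i = 0 \<Longrightarrow> tcol E i = tshift (E j i) (tcol E j)"
proof (rule ext)
  fix k assume Q: "E i j + E j i = 0"
  have "E k j + E j i \<le> E k i" "E k i + E i j \<le> E k j" by (rule tri)+
  then show "tcol E i k = tshift (E j i) (tcol E j) k" using Q by (simp add: tcol_def tshift_def)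
qed


lemma eigval: "teigenvalue E l \<longleftrightarrow> l = 0"
proof
  assume "teigenvalue E l"
  then obtain x where x: "tmulv E x = tshift l x" unfolding teigenvalue_def by blast
  have "tmulv E (tmulv E x) = tmulv E x" by (rule EEx)
  then have "tshift l (tshift l x) = tshift l x" unfolding x tmulv_shift by simp
  then have "l + (l + x i) = l + x i" for i unfolding tshift_def by (metis)
  then show "l = 0" by simp
next
  assume "l = 0"
  then show "teigenvalue E l" unfolding teigenvalue_def using col_eig tshift_0 by metis
qed

lemma eigspace: "teigenspace E 0 = colspace E"
  by (simp add: teigenspace_def tshift_0 colspace_eq)

lemma col_in: "tcol E j \<in> colspace E" using colspace_eq col_eig by simp

lemma shift_in: "x \<in> colspace E \<Longrightarrow> tshift c x \<in> colspace E"
proof -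
  assume "x \<in> colspace E"
  then have "tmulv E x = x" using colspace_eq by simp
  then have "tmulv E (tshift c x) = tshift c x" by (simp add: tmulv_shift)
  then show ?thesis using colspace_eq by simp
qed

lemma gen: "tgenerates {tcol E j | j. E j j = 0} (colspace E)"
proof -
  have seq: "{tcol E j | j. E j j = 0} = tcol E ` {r. E r r = 0}" by auto
  have sub: "tcol E ` {r. E r r = 0} \<subseteq> colspace E" using col_in by blast
  have "tspan (tcol E ` {r. E r r = 0}) = colspace E"
  proof
    show "tspan (tcol E ` {r. E r r = 0}) \<subseteq> colspace E"
    proof
      fix x assume xs: "x \<in> tspan (tcol E ` {r. E r r = 0})"
      have "tcol E ` {r. E r r = 0} \<subseteq> {x. tmulv E x = x}" using sub colspace_eq by simp
      then have "tmulv E x = x" using xs by (rule span_eig)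
      then show "x \<in> colspace E" using colspace_eq by simp
    qed
    show "colspace E \<subseteq> tspan (tcol E ` {r. E r r = 0})"
    proof
      fix x assume "x \<in> colspace E"
      then have "tmulv E x = x" using colspace_eq by simp
      then show "x \<in> tspan (tcol E ` {r. E r r = 0})" by (rule eig_span) auto
    qed
  qed
  then show ?thesis unfolding tgenerates_def seq using sub by simp
qed

lemma gen_hits:
  assumes G: "tgenerates G (colspace E)" and k: "E k k = 0"
  shows "\<exists>g\<in>G. \<exists>c. g = tshift c (tcol E k)"
proof -
  have "tcol E k \<in> tspan G" using G col_in unfolding tgenerates_def by simp
  then obtain F c where F: "finite F" "F \<noteq> {}" "F \<subseteq> G"
    and x: "tcol E k = (\<lambda>i. Max ((\<lambda>v. c v + v i) ` F))"
    unfolding tspan_def by blast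
  have xge: "c v + v i \<le> E i k" if "v \<in> F" for v i
  proof -
    have "c v + v i \<le> Max ((\<lambda>v. c v + v i) ` F)" using F that by (intro Max_ge) auto
    also have "\<dots> = E i k" using fun_cong[OF x, of i] by (simp add: tcol_def)
    finally show ?thesis .
  qed
  have "Max ((\<lambda>v. c v + v k) ` F) \<in> (\<lambda>v. c v + v k) ` F" using F by (intro Max_in) auto
  then obtain v where v: "v \<in> F" "Max ((\<lambda>v. c v + v k) ` F) = c v + v k" by auto
  have "E k k = Max ((\<lambda>v. c v + v k) ` F)" using fun_cong[OF x, of k] by (simp add: tcol_def)
  then have vk: "c v + v k = 0" using v k by simp
  have "v \<in> colspace E" using v F G unfolding tgenerates_def by blast
  then have veig: "tmulv E v = v" using colspace_eq by simp
  have "v = tshift (- c v) (tcol E k)"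
  proof (rule ext)
    fix i
    have "E i k + v k \<le> tmulv E v i" by (rule tmulv_ge)
    then have "E i k + v k \<le> v i" using veig by simp
    then show "v i = tshift (- c v) (tcol E k) i" using xge[OF v(1), of i] vk
      by (simp add: tshift_def tcol_def)
  qed
  then show ?thesis using v F by blast
qed

lemma extremal: "textremal x (colspace E) \<Longrightarrow> \<exists>j c. E j j = 0 \<and> x = tshift c (tcol E j)"
proof (rule ccontr)
  assume exm: "textremal x (colspace E)" and nex: "\<not> (\<exists>j c. E j j = 0 \<and> x = tshift c (tcol E j))"
  define Y where "Y = colspace E - {tshift c x | c. True}"
  have xin: "x \<in> colspace E" and cl: "tclosed Y" using exm unfolding textremal_def Y_def by auto
  have xeig: "tmulv E x = x" using xin colspace_eq by simp
  define C where "C = {r. E r r = 0}"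
  define h where "h l = tshift (x l) (tcol E l)" for l
  have hY: "\<forall>l\<in>C. h l \<in> Y"
  proof
    fix l assume l: "l \<in> C"
    have "h l \<in> colspace E" unfolding h_def by (intro shift_in col_in)
    moreover have "h l \<notin> {tshift c x | c. True}"
    proof
      assume "h l \<in> {tshift c x | c. True}"
      then obtain c where c: "h l = tshift c x" by blast
      have xi: "x i = tshift (x l - c) (tcol E l) i" for i
        using fun_cong[OF c, of i] by (simp add: h_def tshift_def tcol_def)
      have "x = tshift (x l - c) (tcol E l)" by (rule ext, rule xi)
      then show False using nex l unfolding C_def by blast
    qed
    ultimately show "h l \<in> Y" unfolding Y_def by blast
  qed
  obtain k where "E k k = 0" using key by blast
  then have Cne: "C \<noteq> {}" unfolding C_def by blast
  have maxY: "\<forall>a\<in>Y. \<forall>b\<in>Y. (\<lambda>i. max (a i) (b i)) \<in> Y" using cl unfolding tclosed_def by blast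
  have "(\<lambda>i. Max ((\<lambda>l. h l i) ` C)) \<in> Y" by (rule fmax_in) (simp_all add: Cne hY maxY)
  moreover have "(\<lambda>i. Max ((\<lambda>l. h l i) ` C)) = x"
  proof (rule ext)
    fix i
    have img: "(\<lambda>l. h l i) ` C = (\<lambda>r. x r + E i r) ` C" by (simp add: h_def tshift_def tcol_def)
    have em: "x i = Max ((\<lambda>r. x r + E i r) ` C)" by (rule eig_max[OF xeig]) (auto simp: C_def)
    show "Max ((\<lambda>l. h l i) ` C) = x i" unfolding img using em by (rule sym)
  qed
  ultimately have "x \<in> Y" by simp
  moreover have "x \<in> {tshift c x | c. True}" by (rule CollectI, rule exI[of _ 0]) (simp add: tshift_0)
  ultimately show False unfolding Y_def by blast
qed

lemma sccs_form: "crit_sccs E = {{j. E i j + E j i = 0} | i. E i i = 0}"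
  unfolding crit_sccs_def same_iff crit_node_iff by simp

lemma complete: "\<forall>S\<in>crit_sccs E. \<forall>i\<in>S. \<forall>j\<in>S. crit_edge E j i"
proof (intro ballI)
  fix S i j assume "S \<in> crit_sccs E" "i \<in> S" "j \<in> S"
  then obtain a where "i \<in> {j. E a j + E j a = 0}" "j \<in> {j. E a j + E j a = 0}"
    unfolding sccs_form by blast
  then have "E a i + E i a = 0" "E a j + E j a = 0" by auto
  then have "E i a + E a i = 0" by simp
  then have "E i j + E j i = 0" using Qtrans \<open>E a j + E j a = 0\<close> by blast
  then show "crit_edge E j i" by (rule Q_crit_edge)
qed

lemma rank: "trank E = card (crit_sccs E)"
proof -
  define Q where "Q a b \<longleftrightarrow> E a b + E b a = 0" for a b
  have Qsym: "Q a b \<Longrightarrow> Q b a" for a b unfolding Q_def by simp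
  have Qtr: "Q a b \<Longrightarrow> Q b c \<Longrightarrow> Q a c" for a b c unfolding Q_def by (rule Qtrans)
  have Qd: "Q a b \<Longrightarrow> E a a = 0" for a b unfolding Q_def by (rule Qdiag)
  have Qrefl: "E a a = 0 \<Longrightarrow> Q a a" for a unfolding Q_def by simp
  define sccs where "sccs = crit_sccs E"
  have sccs_eq: "sccs = {{j. Q i j} | i. E i i = 0}" unfolding sccs_def sccs_form Q_def by simp
  have fin: "finite sccs" by simp
  have Seq: "j \<in> S \<longleftrightarrow> Q r j" if S_in: "S \<in> sccs" and r_in: "r \<in> S" for S r j
  proof -
    obtain a where a: "S = {j. Q a j}" using S_in unfolding sccs_eq by blast
    with r_in have "Q a r" by simp
    then have ar: "Q a r" .
    have "Q a j \<longleftrightarrow> Q r j" using Qtr[OF Qsym[OF ar], of j] Qtr[OF ar, of j] by blast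
    then show ?thesis unfolding a by simp
  qed
  define rep where "rep S = (SOME k. k \<in> S)" for S :: "'n set"
  have rep_in: "rep S \<in> S" if S_in: "S \<in> sccs" for S
  proof -
    obtain a where "E a a = 0" "S = {j. Q a j}" using S_in unfolding sccs_eq by blast
    then have "a \<in> S" using Qrefl by simp
    then show ?thesis unfolding rep_def by (rule someI)
  qed
  have rep_crit: "E (rep S) (rep S) = 0" if "S \<in> sccs" for S
  proof -
    have "Q (rep S) (rep S)" using Seq[OF that rep_in[OF that], of "rep S"] rep_in[OF that] by blast
    then show ?thesis using Qd by blast
  qed
  have lower: "card sccs \<le> card G" if G: "finite G" "tgenerates G (colspace E)" for G
  proof -
    define f where "f S = (SOME g. g \<in> G \<and> (\<exists>c. g = tshift c (tcol E (rep S))))" for S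
    have fS: "f S \<in> G \<and> (\<exists>c. f S = tshift c (tcol E (rep S)))" if S_in: "S \<in> sccs" for S
    proof -
      from gen_hits[OF G(2) rep_crit[OF S_in]] obtain g c where
        "g \<in> G" "g = tshift c (tcol E (rep S))" by blast
      then have "g \<in> G \<and> (\<exists>c. g = tshift c (tcol E (rep S)))" by blast
      then show ?thesis unfolding f_def by (rule someI[where P = "\<lambda>g. g \<in> G \<and> (\<exists>c. g = tshift c (tcol E (rep S)))"])
    qed
    have "inj_on f sccs"
    proof (rule inj_onI)
      fix S T assume S: "S \<in> sccs" and T: "T \<in> sccs" and eq: "f S = f T"
      obtain c1 where c1: "f S = tshift c1 (tcol E (rep S))" using fS[OF S] by blast
      obtain c2 where c2: "f T = tshift c2 (tcol E (rep T))" using fS[OF T] by blast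
      have h: "c1 + E k (rep S) = c2 + E k (rep T)" for k
        using fun_cong[OF eq, of k] c1 c2 by (simp add: tshift_def tcol_def)
      have "Q (rep S) (rep T)" unfolding Q_def
        using h[of "rep S"] h[of "rep T"] rep_crit[OF S] rep_crit[OF T] by linarith
      then have ab: "Q (rep S) (rep T)" .
      have "Q (rep S) j \<longleftrightarrow> Q (rep T) j" for j
        using Qtr[OF Qsym[OF ab], of j] Qtr[OF ab, of j] by blast
      show "S = T"
      proof (rule set_eqI)
        fix j
        show "j \<in> S \<longleftrightarrow> j \<in> T"
          using Seq[OF S rep_in[OF S], of j] Seq[OF T rep_in[OF T], of j] \<open>Q (rep S) j \<longleftrightarrow> Q (rep T) j\<close> by blast
      qed
    qed
    moreover have "f ` sccs \<subseteq> G" using fS by blast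
    ultimately show ?thesis using card_inj_on_le G(1) by blast
  qed
  define R where "R = rep ` sccs"
  have Rc: "R \<subseteq> {r. E r r = 0}" unfolding R_def using rep_crit by blast
  have cov: "\<forall>l. E l l = 0 \<longrightarrow> (\<exists>r\<in>R. E l r + E r l = 0)"
  proof (intro allI impI)
    fix l assume l: "E l l = 0"
    have S: "{j. Q l j} \<in> sccs" unfolding sccs_eq using l by blast
    then have "rep {j. Q l j} \<in> {j. Q l j}" by (rule rep_in)
    then have "E l (rep {j. Q l j}) + E (rep {j. Q l j}) l = 0" unfolding Q_def by simp
    moreover have "rep {j. Q l j} \<in> R" unfolding R_def using S by blast
    ultimately show "\<exists>r\<in>R. E l r + E r l = 0" by blast
  qed
  define G0 where "G0 = tcol E ` R"
  have G0sub: "G0 \<subseteq> colspace E" unfolding G0_def using col_in by blast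
  have "tspan G0 = colspace E"
  proof
    show "tspan G0 \<subseteq> colspace E"
    proof
      fix x assume xs: "x \<in> tspan G0"
      have "G0 \<subseteq> {x. tmulv E x = x}" using G0sub colspace_eq by simp
      then have "tmulv E x = x" using xs by (rule span_eig)
      then show "x \<in> colspace E" using colspace_eq by simp
    qed
    show "colspace E \<subseteq> tspan G0"
    proof
      fix x assume "x \<in> colspace E"
      then have "tmulv E x = x" using colspace_eq by simp
      then show "x \<in> tspan G0" unfolding G0_def using Rc cov by (rule eig_span)
    qed
  qed
  then have gen0: "tgenerates G0 (colspace E)" unfolding tgenerates_def using G0sub by simp
  have finG0: "finite G0" unfolding G0_def by simp
  have "card G0 \<le> card R" unfolding G0_def by (rule card_image_le) simp
  also have "card R \<le> card sccs" unfolding R_def by (rule card_image_le) (rule fin)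
  finally have c0: "card G0 \<le> card sccs" .
  have P0: "\<exists>G. finite G \<and> card G = card G0 \<and> tgenerates G (colspace E)"
    using gen0 finG0 by blast
  have up: "trank E \<le> card G0" unfolding trank_def using P0 by (rule Least_le)
  have "\<exists>G. finite G \<and> card G = trank E \<and> tgenerates G (colspace E)"
    unfolding trank_def using P0 by (rule LeastI)
  then obtain G1 where G1: "finite G1" "card G1 = trank E" "tgenerates G1 (colspace E)" by blast
  have lo: "card sccs \<le> trank E" using lower[OF G1(1) G1(3)] G1(2) by simp
  have "trank E = card sccs" using up lo c0 by (rule_tac antisym) linarith+
  then show ?thesis unfolding sccs_def .
qed

end

lemma trn_diag: "trn E j j = E j j" by (simp add: trn_def)

theorem corollary5p2:
  fixes E :: "('n::finite) tmat"
  assumes "tidempotent E"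
  shows "((\<forall>l. teigenvalue E l \<longleftrightarrow> l = 0) \<and> max_cycle_mean E = 0 \<and> teigenspace E 0 = colspace E) \<and>
    (\<forall>i. E i i = 0 \<longleftrightarrow> crit_node E i) \<and>
    (tgenerates {tcol E j | j. E j j = 0} (colspace E)) \<and>
    (\<forall>x. textremal x (colspace E) \<longrightarrow> (\<exists>j c. E j j = 0 \<and> x = tshift c (tcol E j))) \<and>
    (tgenerates {trow E i | i. E i i = 0} (rowspace E)) \<and>
    (\<forall>x. textremal x (rowspace E) \<longrightarrow> (\<exists>i c. E i i = 0 \<and> x = tshift c (trow E i))) \<and>
    (trank E = card (crit_sccs E)) \<and>
    (\<forall>S\<in>crit_sccs E. \<forall>i\<in>S. \<forall>j\<in>S. crit_edge E j i) \<and>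
    (\<forall>i j. crit_same_scc E i j \<longrightarrow> (\<exists>c. tcol E i = tshift c (tcol E j))) \<and>
    (\<forall>i j. crit_same_scc E i j \<longrightarrow> (\<exists>c. trow E i = tshift c (trow E j)))"
proof -
  interpret A: idem E using assms by unfold_locales
  interpret B: idem "trn E" using trn_idem[OF assms] by unfold_locales
  have p1: "\<forall>l. teigenvalue E l \<longleftrightarrow> l = 0" using A.eigval by blast
  have p2: "\<forall>i. E i i = 0 \<longleftrightarrow> crit_node E i" using A.crit_node_iff by simp
  have p5: "tgenerates {trow E i | i. E i i = 0} (rowspace E)"
    using B.gen unfolding trow_trn rowspace_trn trn_diag .
  have p6: "\<forall>x. textremal x (rowspace E) \<longrightarrow> (\<exists>i c. E i i = 0 \<and> x = tshift c (trow E i))"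
    using B.extremal unfolding trow_trn rowspace_trn trn_diag by blast
  have p9: "\<forall>i j. crit_same_scc E i j \<longrightarrow> (\<exists>c. tcol E i = tshift c (tcol E j))"
    using A.same_iff A.colshift by blast
  have p10: "\<forall>i j. crit_same_scc E i j \<longrightarrow> (\<exists>c. trow E i = tshift c (trow E j))"
  proof (intro allI impI)
    fix i j assume "crit_same_scc E i j"
    then have "E i j + E j i = 0" using A.same_iff by blast
    then have "trn E i j + trn E j i = 0" by (simp add: trn_def)
    then have "tcol (trn E) i = tshift (trn E j i) (tcol (trn E) j)" by (rule B.colshift)
    then show "\<exists>c. trow E i = tshift c (trow E j)" by (auto simp: trow_trn)
  qed
  have p4: "\<forall>x. textremal x (colspace E) \<longrightarrow> (\<exists>j c. E j j = 0 \<and> x = tshift c (tcol E j))"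
    using A.extremal by blast
  show ?thesis by (intro conjI p1 A.mcm A.eigspace p2 A.gen p4 p5 p6 A.rank A.complete p9 p10)
qed
end
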